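(* Let $a\in(0,1)$, $p\in(0,1)$, and let $X=(X_t)_{t=0,\dots,n}$ be a stationary Markov chain generated by the copula $C(u,v)=a\min(u,v)+(1-a)\max(u+v-1,0)$ and Bernoulli($p$) marginal distribution, and let $\bar p=\frac{1}{n+1}\sum_{t=0}^nX_t$. Then as $n\to\infty$, $$(n+1)\operatorname{Var}(\bar p)\to \frac{p(1-p)(a+1-2p)}{1-a}\ \text{ if } p<1/2,\qquad (n+1)\operatorname{Var}(\bar p)\to \frac{p(1-p)(2p-1+a)}{1-a}\ \text{ if } p\ge1/2;$$ in particular, for $p\neq1/2$ the asymptotic variance of $\bar p$ equals the asymptotic variance of the maximum likelihood estimator $\hat p$ of $p$, namely the $(p,p)$ entry of the asymptotic covariance matrix of $\sqrt{n+1}((\hat a,\hat p)-(a,p))$.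
   Context: A stationary Markov chain $(X_t)$ is generated by a copula $C$ and a marginal cdf $F$ if each $X_t$ has cdf $F$ and $P(X_t\le x,X_{t+1}\le y)=C(F(x),F(y))$ for all $x,y$; Bernoulli($p$) means $P(X_t=1)=p$. For $p\neq1/2$ the maximum likelihood estimator $(\hat a,\hat p)$ of $(a,p)$ (a consistent root of the likelihood equations based on the transition probabilities of the chain) satisfies $\sqrt{n+1}((\hat a,\hat p)-(a,p))\to N_2(0,\Sigma^{-1})$, where the $(p,p)$ entry of $\Sigma^{-1}$ is $\frac{p(1-p)(a+1-2p)}{1-a}$ for $p<1/2$ and $\frac{p(1-p)(2p-1+a)}{1-a}$ for $p>1/2$. *)

theory Defs
  imports "HOL-Probability.Probability"
begin

definition bernoulli_cdf :: "real \<Rightarrow> real \<Rightarrow> real" where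
  "bernoulli_cdf p x = (if x < 0 then 0 else if x < 1 then 1 - p else 1)"

definition mix_copula :: "real \<Rightarrow> real \<Rightarrow> real \<Rightarrow> real" where
  "mix_copula a u v = a * min u v + (1 - a) * max (u + v - 1) 0"

text \<open>The Markov property is stated in the
  discrete form (appropriate since the marginal is Bernoulli, so X t is a.s. in {0,1}):
  P(X_0 = x_0, ..., X_{t+1} = x_{t+1}) P(X_t = x_t)
    = P(X_0 = x_0, ..., X_t = x_t) P(X_t = x_t, X_{t+1} = x_{t+1}).\<close>
definition copula_markov_chain ::
    "'w measure \<Rightarrow> (nat \<Rightarrow> 'w \<Rightarrow> real) \<Rightarrow> (real \<Rightarrow> real \<Rightarrow> real) \<Rightarrow> (real \<Rightarrow> real) \<Rightarrow> bool" where
  "copula_markov_chain M X C F \<longleftrightarrow>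
     (\<forall>t. X t \<in> borel_measurable M) \<and>
     (\<forall>t x. measure M {\<omega> \<in> space M. X t \<omega> \<le> x} = F x) \<and>
     (\<forall>t x y. measure M {\<omega> \<in> space M. X t \<omega> \<le> x \<and> X (Suc t) \<omega> \<le> y} = C (F x) (F y)) \<and>
     (\<forall>t (xs :: nat \<Rightarrow> real).
        measure M {\<omega> \<in> space M. \<forall>i\<le>Suc t. X i \<omega> = xs i} * measure M {\<omega> \<in> space M. X t \<omega> = xs t}
      = measure M {\<omega> \<in> space M. \<forall>i\<le>t. X i \<omega> = xs i} *
        measure M {\<omega> \<in> space M. X t \<omega> = xs t \<and> X (Suc t) \<omega> = xs (Suc t)})"

text \<open>The (p,p) entry of the inverse Fisher information Sigma^{-1}, i.e. the asymptotic
  variance of the MLE of p, as given in the context (for p \<noteq> 1/2).\<close>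
definition mle_asym_var_p :: "real \<Rightarrow> real \<Rightarrow> real" where
  "mle_asym_var_p a p = (if p < 1/2 then p * (1 - p) * (a + 1 - 2 * p) / (1 - a)
                         else p * (1 - p) * (2 * p - 1 + a) / (1 - a))"

end

theory Submission
  imports Defs
begin

locale cmc = prob_space M for M :: "'w measure" +
  fixes X :: "nat \<Rightarrow> 'w \<Rightarrow> real" and a p :: real
  assumes a0: "0 < a" and a1: "a < 1" and p0: "0 < p" and p1: "p < 1"
    and chain: "copula_markov_chain M X (mix_copula a) (bernoulli_cdf p)"
begin

lemma Xmeas[measurable]: "X t \<in> borel_measurable M"
  using chain unfolding copula_markov_chain_def by blast

lemma cdf: "prob {\<omega> \<in> space M. X t \<omega> \<le> x} = bernoulli_cdf p x"
  using chain unfolding copula_markov_chain_def by blast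

lemma joint: "prob {\<omega> \<in> space M. X t \<omega> \<le> x \<and> X (Suc t) \<omega> \<le> y}
   = mix_copula a (bernoulli_cdf p x) (bernoulli_cdf p y)"
  using chain unfolding copula_markov_chain_def by blast

lemma markov: "prob {\<omega> \<in> space M. \<forall>i\<le>Suc t. X i \<omega> = xs i} * prob {\<omega> \<in> space M. X t \<omega> = xs t}
      = prob {\<omega> \<in> space M. \<forall>i\<le>t. X i \<omega> = xs i} *
        prob {\<omega> \<in> space M. X t \<omega> = xs t \<and> X (Suc t) \<omega> = xs (Suc t)}"
  using chain unfolding copula_markov_chain_def by blast

lemma AE_null: assumes "A \<in> sets M" "prob A = 0" shows "AE \<omega> in M. \<omega> \<notin> A"
proof -
  have "(AE \<omega> in M. \<omega> \<notin> A) \<longleftrightarrow> emeasure M A = 0"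
    by (rule AE_iff_measurable[OF assms(1)]) (use sets.sets_into_space[OF assms(1)] in auto)
  moreover have "emeasure M A = 0" using assms by (simp add: emeasure_eq_measure)
  ultimately show ?thesis by simp
qed

lemma AE_01_t: "AE \<omega> in M. X t \<omega> = 0 \<or> X t \<omega> = 1"
proof -
  have n1: "AE \<omega> in M. \<forall>n::nat. \<omega> \<notin> {\<omega> \<in> space M. X t \<omega> \<le> - 1 / Suc n}"
    unfolding AE_all_countable
  proof
    fix n :: nat
    show "AE \<omega> in M. \<omega> \<notin> {\<omega> \<in> space M. X t \<omega> \<le> - 1 / Suc n}"
      by (rule AE_null) (auto simp: cdf bernoulli_cdf_def)
  qed
  have n2: "AE \<omega> in M. \<forall>n::nat. \<omega> \<notin> {\<omega> \<in> space M. X t \<omega> \<le> 1 - 1 / Suc (Suc n)} - {\<omega> \<in> space M. X t \<omega> \<le> 0}"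
    unfolding AE_all_countable
  proof
    fix n :: nat
    have "prob ({\<omega> \<in> space M. X t \<omega> \<le> 1 - 1 / Suc (Suc n)} - {\<omega> \<in> space M. X t \<omega> \<le> 0})
       = prob {\<omega> \<in> space M. X t \<omega> \<le> 1 - 1 / Suc (Suc n)} - prob {\<omega> \<in> space M. X t \<omega> \<le> 0}"
    proof (rule finite_measure_Diff)
      have h: "0 \<le> 1 - 1 / real (Suc (Suc n))" by (simp add: field_simps)
      show "{\<omega> \<in> space M. X t \<omega> \<le> 0} \<subseteq> {\<omega> \<in> space M. X t \<omega> \<le> 1 - 1 / Suc (Suc n)}"
      proof safe
        fix x assume "X t x \<le> 0" then show "X t x \<le> 1 - 1 / real (Suc (Suc n))" using h by linarith
      qed
    qed auto
    also have "\<dots> = 0" unfolding cdf bernoulli_cdf_def by auto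
    finally show "AE \<omega> in M. \<omega> \<notin> {\<omega> \<in> space M. X t \<omega> \<le> 1 - 1 / Suc (Suc n)} - {\<omega> \<in> space M. X t \<omega> \<le> 0}"
      by (intro AE_null) auto
  qed
  have n3: "AE \<omega> in M. \<omega> \<notin> space M - {\<omega> \<in> space M. X t \<omega> \<le> 1}"
  proof (rule AE_null)
    show "prob (space M - {\<omega> \<in> space M. X t \<omega> \<le> 1}) = 0"
      by (subst prob_compl) (auto simp: cdf bernoulli_cdf_def)
  qed auto
  show ?thesis
  proof (rule AE_mp[OF AE_conjI[OF AE_space AE_conjI[OF n1 AE_conjI[OF n2 n3]]]], rule AE_I2, intro impI, elim conjE)
    fix \<omega> assume sp: "\<omega> \<in> space M"
      and h1: "\<forall>n::nat. \<omega> \<notin> {\<omega> \<in> space M. X t \<omega> \<le> - 1 / Suc n}"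
      and h2: "\<forall>n::nat. \<omega> \<notin> {\<omega> \<in> space M. X t \<omega> \<le> 1 - 1 / Suc (Suc n)} - {\<omega> \<in> space M. X t \<omega> \<le> 0}"
      and h3: "\<omega> \<notin> space M - {\<omega> \<in> space M. X t \<omega> \<le> 1}"
    have le1: "X t \<omega> \<le> 1" using h3 sp by auto
    have ge0: "X t \<omega> \<ge> 0"
    proof (rule ccontr)
      assume "\<not> X t \<omega> \<ge> 0"
      then have "- X t \<omega> > 0" by simp
      then obtain n :: nat where "inverse (Suc n) < - X t \<omega>" using reals_Archimedean by blast
      then have "X t \<omega> \<le> - 1 / Suc n" by (simp add: field_simps)
      then show False using h1 sp by auto
    qed
    have "\<not> (0 < X t \<omega> \<and> X t \<omega> < 1)"
    proof
      assume h: "0 < X t \<omega> \<and> X t \<omega> < 1"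
      then have "1 - X t \<omega> > 0" by simp
      then obtain n :: nat where n: "inverse (Suc n) < 1 - X t \<omega>" using reals_Archimedean by blast
      have "inverse (Suc (Suc n)) \<le> inverse (Suc n)" by (simp add: field_simps)
      with n have "inverse (real (Suc (Suc n))) < 1 - X t \<omega>" by linarith
      then have "1 / real (Suc (Suc n)) < 1 - X t \<omega>" by (simp only: divide_inverse mult_1)
      then have "X t \<omega> \<le> 1 - 1 / Suc (Suc n)" by linarith
      then show False using h2 sp h by auto
    qed
    then show "X t \<omega> = 0 \<or> X t \<omega> = 1" using le1 ge0 by linarith
  qed
qed

lemma AE_01: "AE \<omega> in M. \<forall>t. X t \<omega> = 0 \<or> X t \<omega> = 1"
  unfolding AE_all_countable using AE_01_t by blast

end

context cmc begin

definition atom :: "nat \<Rightarrow> (nat \<Rightarrow> real) \<Rightarrow> 'w set" where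
  "atom t xs = {\<omega> \<in> space M. \<forall>i\<le>t. X i \<omega> = xs i}"

definition Paths :: "nat \<Rightarrow> (nat \<Rightarrow> real) set" where
  "Paths t = PiE {..t} (\<lambda>_. {0,1})"

lemma atom_sets[measurable]: "atom t xs \<in> sets M"
proof -
  have "atom t xs = {\<omega> \<in> space M. \<forall>i\<in>{..t}. X i \<omega> = xs i}" unfolding atom_def by auto
  also have "\<dots> \<in> sets M" by measurable
  finally show ?thesis .
qed

lemma finite_Paths: "finite (Paths t)"
  unfolding Paths_def by (rule finite_PiE) auto

lemma sum_atoms:
  assumes E: "E \<in> sets M" and ae: "AE \<omega> in M. \<omega> \<in> E \<longleftrightarrow> \<Phi> (restrict (\<lambda>i. X i \<omega>) {..t})"
  shows "prob E = (\<Sum>xs\<in>{xs\<in>Paths t. \<Phi> xs}. prob (atom t xs))"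
proof -
  let ?S = "{xs\<in>Paths t. \<Phi> xs}"
  have fin: "finite ?S" using finite_Paths by auto
  have disj: "disjoint_family_on (atom t) ?S"
  unfolding disjoint_family_on_def proof (intro ballI impI)
    fix xs ys assume xs: "xs \<in> ?S" and ys: "ys \<in> ?S" and ne: "xs \<noteq> ys"
    have "\<exists>i\<le>t. xs i \<noteq> ys i"
    proof (rule ccontr)
      assume "\<not> (\<exists>i\<le>t. xs i \<noteq> ys i)"
      then have "xs = ys" using xs ys unfolding Paths_def by (intro PiE_ext[of xs "{..t}" "\<lambda>_. {0,1}"]) auto
      with ne show False by simp
    qed
    then show "atom t xs \<inter> atom t ys = {}" unfolding atom_def by auto
  qed
  have U: "prob (\<Union>xs\<in>?S. atom t xs) = (\<Sum>xs\<in>?S. prob (atom t xs))"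
    by (rule measure_finite_Union[OF fin _ disj]) (auto simp: emeasure_eq_measure)
  have "prob E = prob (\<Union>xs\<in>?S. atom t xs)"
  proof (rule measure_eq_AE)
    show "AE \<omega> in M. \<omega> \<in> E \<longleftrightarrow> \<omega> \<in> (\<Union>xs\<in>?S. atom t xs)"
    proof (rule AE_mp[OF AE_conjI[OF AE_space AE_conjI[OF AE_01 ae]]], rule AE_I2, intro impI, elim conjE)
      fix \<omega> assume sp: "\<omega> \<in> space M" and b: "\<forall>t. X t \<omega> = 0 \<or> X t \<omega> = 1"
        and e: "\<omega> \<in> E \<longleftrightarrow> \<Phi> (restrict (\<lambda>i. X i \<omega>) {..t})"
      let ?r = "restrict (\<lambda>i. X i \<omega>) {..t}"
      have r: "?r \<in> Paths t" unfolding Paths_def using b by (auto simp: restrict_PiE_iff)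
      have iff: "\<omega> \<in> atom t xs \<longleftrightarrow> xs = ?r" if xsP: "xs \<in> Paths t" for xs
      proof
        assume a: "\<omega> \<in> atom t xs"
        show "xs = ?r"
        proof (rule PiE_ext[of xs "{..t}" "\<lambda>_. {0,1}"])
          show "xs \<in> PiE {..t} (\<lambda>_. {0,1})" using xsP unfolding Paths_def .
          show "?r \<in> PiE {..t} (\<lambda>_. {0,1})" using r unfolding Paths_def .
          fix i assume "i \<in> {..t}"
          then show "xs i = ?r i" using a unfolding atom_def by simp
        qed
      next
        assume "xs = ?r" then show "\<omega> \<in> atom t xs" using sp unfolding atom_def by simp
      qed
      have "\<omega> \<in> (\<Union>xs\<in>?S. atom t xs) \<longleftrightarrow> ?r \<in> ?S"
      proof
        assume "\<omega> \<in> (\<Union>xs\<in>?S. atom t xs)"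
        then obtain xs where xs: "xs \<in> ?S" "\<omega> \<in> atom t xs" by blast
        then have "xs = ?r" using iff[of xs] by blast
        then show "?r \<in> ?S" using xs(1) by simp
      next
        assume "?r \<in> ?S"
        moreover have "\<omega> \<in> atom t ?r" using iff[OF r] by simp
        ultimately show "\<omega> \<in> (\<Union>xs\<in>?S. atom t xs)" by blast
      qed
      then show "\<omega> \<in> E \<longleftrightarrow> \<omega> \<in> (\<Union>xs\<in>?S. atom t xs)" using e r by simp
    qed
  next
    show "E \<in> sets M" by (rule E)
    show "(\<Union>xs\<in>?S. atom t xs) \<in> sets M" using fin by (intro sets.finite_UN) auto
  qed
  with U show ?thesis by simp
qed

lemma markov_step:
  "prob (atom (Suc t) (xs(Suc t := y))) * prob {\<omega> \<in> space M. X t \<omega> = xs t}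
   = prob (atom t xs) * prob {\<omega> \<in> space M. X t \<omega> = xs t \<and> X (Suc t) \<omega> = y}"
proof -
  have "atom t (xs(Suc t := y)) = atom t xs" unfolding atom_def by auto
  then show ?thesis using markov[of t "xs(Suc t := y)"] unfolding atom_def by simp
qed

lemma three:
  assumes st: "s \<le> t" and y: "y \<in> {0,1}"
  shows "prob {\<omega> \<in> space M. X s \<omega> = x \<and> X t \<omega> = z \<and> X (Suc t) \<omega> = y} * prob {\<omega> \<in> space M. X t \<omega> = z}
       = prob {\<omega> \<in> space M. X s \<omega> = x \<and> X t \<omega> = z} * prob {\<omega> \<in> space M. X t \<omega> = z \<and> X (Suc t) \<omega> = y}"
proof -
  let ?S = "{xs\<in>Paths t. xs s = x \<and> xs t = z}"
  let ?S' = "{xs\<in>Paths (Suc t). xs s = x \<and> xs t = z \<and> xs (Suc t) = y}"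
  let ?h = "\<lambda>xs. xs(Suc t := y)"
  have e1: "prob {\<omega> \<in> space M. X s \<omega> = x \<and> X t \<omega> = z \<and> X (Suc t) \<omega> = y} = (\<Sum>xs\<in>?S'. prob (atom (Suc t) xs))"
  proof (rule sum_atoms)
    show "AE \<omega> in M. (\<omega> \<in> {\<omega> \<in> space M. X s \<omega> = x \<and> X t \<omega> = z \<and> X (Suc t) \<omega> = y}) \<longleftrightarrow>
       (\<lambda>xs. xs s = x \<and> xs t = z \<and> xs (Suc t) = y) (restrict (\<lambda>i. X i \<omega>) {..Suc t})"
      by (rule AE_I2) (use st in simp)
  qed measurable
  have e2: "prob {\<omega> \<in> space M. X s \<omega> = x \<and> X t \<omega> = z} = (\<Sum>xs\<in>?S. prob (atom t xs))"
  proof (rule sum_atoms)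
    show "AE \<omega> in M. (\<omega> \<in> {\<omega> \<in> space M. X s \<omega> = x \<and> X t \<omega> = z}) \<longleftrightarrow>
       (\<lambda>xs. xs s = x \<and> xs t = z) (restrict (\<lambda>i. X i \<omega>) {..t})"
      by (rule AE_I2) (use st in simp)
  qed measurable
  have inj: "inj_on ?h ?S"
  proof (rule inj_onI)
    fix xs ys assume xs: "xs \<in> ?S" and ys: "ys \<in> ?S" and eq: "?h xs = ?h ys"
    show "xs = ys"
    proof (rule PiE_ext[of xs "{..t}" "\<lambda>_. {0,1}"])
      show "xs \<in> PiE {..t} (\<lambda>_. {0,1})" "ys \<in> PiE {..t} (\<lambda>_. {0,1})" using xs ys unfolding Paths_def by auto
      fix i assume "i \<in> {..t}"
      then show "xs i = ys i" using fun_cong[OF eq, of i] by auto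
    qed
  qed
  have img: "?h ` ?S = ?S'"
  proof
    show "?h ` ?S \<subseteq> ?S'"
    proof
      fix xs' assume "xs' \<in> ?h ` ?S"
      then obtain xs where xs: "xs \<in> ?S" and xs': "xs' = ?h xs" by blast
      have "xs' \<in> Paths (Suc t)" using xs y unfolding xs' Paths_def PiE_iff extensional_def by auto
      then show "xs' \<in> ?S'" using xs st unfolding xs' by auto
    qed
  next
    show "?S' \<subseteq> ?h ` ?S"
    proof
      fix xs' assume xs': "xs' \<in> ?S'"
      let ?xs = "restrict xs' {..t}"
      have "?xs \<in> ?S" using xs' st unfolding Paths_def PiE_iff by auto
      moreover have "xs' = ?h ?xs"
      proof
        fix i show "xs' i = ?h ?xs i"
          using xs' unfolding Paths_def PiE_iff extensional_def
          by (cases "i \<le> t"; cases "i = Suc t") auto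
      qed
      ultimately show "xs' \<in> ?h ` ?S" by blast
    qed
  qed
  have "prob {\<omega> \<in> space M. X s \<omega> = x \<and> X t \<omega> = z \<and> X (Suc t) \<omega> = y} * prob {\<omega> \<in> space M. X t \<omega> = z}
      = (\<Sum>xs\<in>?S. prob (atom (Suc t) (?h xs)) * prob {\<omega> \<in> space M. X t \<omega> = z})"
    unfolding e1 img[symmetric] sum.reindex[OF inj] sum_distrib_right by simp
  also have "\<dots> = (\<Sum>xs\<in>?S. prob (atom t xs) * prob {\<omega> \<in> space M. X t \<omega> = z \<and> X (Suc t) \<omega> = y})"
  proof (rule sum.cong[OF refl])
    fix xs assume "xs \<in> ?S"
    then have "xs t = z" by simp
    then show "prob (atom (Suc t) (?h xs)) * prob {\<omega> \<in> space M. X t \<omega> = z}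
      = prob (atom t xs) * prob {\<omega> \<in> space M. X t \<omega> = z \<and> X (Suc t) \<omega> = y}"
      using markov_step[of t xs y] by simp
  qed
  also have "\<dots> = prob {\<omega> \<in> space M. X s \<omega> = x \<and> X t \<omega> = z} * prob {\<omega> \<in> space M. X t \<omega> = z \<and> X (Suc t) \<omega> = y}"
    unfolding e2 sum_distrib_right ..
  finally show ?thesis .
qed

end

context cmc begin

lemma prob_split:
  assumes "A \<in> sets M" "B \<in> sets M" "C \<in> sets M" "B \<inter> C = {}"
    and "AE \<omega> in M. \<omega> \<in> A \<longleftrightarrow> \<omega> \<in> B \<or> \<omega> \<in> C"
  shows "prob A = prob B + prob C"
proof -
  have "prob A = prob (B \<union> C)" by (rule measure_eq_AE) (use assms in auto)
  also have "\<dots> = prob B + prob C" by (rule finite_measure_Union) (use assms in auto)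
  finally show ?thesis .
qed

definition d :: real where "d = mix_copula a (1 - p) (1 - p)"

lemma P0: "prob {\<omega> \<in> space M. X t \<omega> = 0} = 1 - p"
proof -
  have "prob {\<omega> \<in> space M. X t \<omega> = 0} = prob {\<omega> \<in> space M. X t \<omega> \<le> 0}"
  proof (rule measure_eq_AE)
    show "AE \<omega> in M. (\<omega> \<in> {\<omega> \<in> space M. X t \<omega> = 0}) = (\<omega> \<in> {\<omega> \<in> space M. X t \<omega> \<le> 0})"
      using AE_01_t[of t] by eventually_elim auto
  qed measurable
  also have "\<dots> = 1 - p" by (simp add: cdf bernoulli_cdf_def)
  finally show ?thesis .
qed

lemma P1: "prob {\<omega> \<in> space M. X t \<omega> = 1} = p"
proof -
  have "prob {\<omega> \<in> space M. X t \<omega> = 1} = prob (space M - {\<omega> \<in> space M. X t \<omega> \<le> 0})"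
  proof (rule measure_eq_AE)
    show "AE \<omega> in M. (\<omega> \<in> {\<omega> \<in> space M. X t \<omega> = 1}) = (\<omega> \<in> space M - {\<omega> \<in> space M. X t \<omega> \<le> 0})"
      using AE_01_t[of t] by eventually_elim auto
  qed measurable
  also have "\<dots> = 1 - (1 - p)" by (subst prob_compl) (auto simp: cdf bernoulli_cdf_def)
  finally show ?thesis by simp
qed

lemma P00: "prob {\<omega> \<in> space M. X t \<omega> = 0 \<and> X (Suc t) \<omega> = 0} = d"
proof -
  have "prob {\<omega> \<in> space M. X t \<omega> = 0 \<and> X (Suc t) \<omega> = 0} = prob {\<omega> \<in> space M. X t \<omega> \<le> 0 \<and> X (Suc t) \<omega> \<le> 0}"
  proof (rule measure_eq_AE)
    show "AE \<omega> in M. (\<omega> \<in> {\<omega> \<in> space M. X t \<omega> = 0 \<and> X (Suc t) \<omega> = 0}) = (\<omega> \<in> {\<omega> \<in> space M. X t \<omega> \<le> 0 \<and> X (Suc t) \<omega> \<le> 0})"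
      using AE_01_t[of t] AE_01_t[of "Suc t"] by eventually_elim auto
  qed measurable
  also have "\<dots> = d" by (simp add: joint bernoulli_cdf_def d_def)
  finally show ?thesis .
qed

lemma P01: "prob {\<omega> \<in> space M. X t \<omega> = 0 \<and> X (Suc t) \<omega> = 1} = (1 - p) - d"
proof -
  have "prob {\<omega> \<in> space M. X t \<omega> = 0} = prob {\<omega> \<in> space M. X t \<omega> = 0 \<and> X (Suc t) \<omega> = 0}
       + prob {\<omega> \<in> space M. X t \<omega> = 0 \<and> X (Suc t) \<omega> = 1}"
  proof (rule prob_split)
    show "AE \<omega> in M. (\<omega> \<in> {\<omega> \<in> space M. X t \<omega> = 0}) = (\<omega> \<in> {\<omega> \<in> space M. X t \<omega> = 0 \<and> X (Suc t) \<omega> = 0}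
       \<or> \<omega> \<in> {\<omega> \<in> space M. X t \<omega> = 0 \<and> X (Suc t) \<omega> = 1})"
      using AE_01_t[of "Suc t"] by eventually_elim auto
  qed auto
  then show ?thesis using P0 P00 by simp
qed

lemma P11: "prob {\<omega> \<in> space M. X t \<omega> = 1 \<and> X (Suc t) \<omega> = 1} = 2 * p - 1 + d"
proof -
  have "prob {\<omega> \<in> space M. X (Suc t) \<omega> = 1} = prob {\<omega> \<in> space M. X t \<omega> = 0 \<and> X (Suc t) \<omega> = 1}
       + prob {\<omega> \<in> space M. X t \<omega> = 1 \<and> X (Suc t) \<omega> = 1}"
  proof (rule prob_split)
    show "AE \<omega> in M. (\<omega> \<in> {\<omega> \<in> space M. X (Suc t) \<omega> = 1}) = (\<omega> \<in> {\<omega> \<in> space M. X t \<omega> = 0 \<and> X (Suc t) \<omega> = 1}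
       \<or> \<omega> \<in> {\<omega> \<in> space M. X t \<omega> = 1 \<and> X (Suc t) \<omega> = 1})"
      using AE_01_t[of t] by eventually_elim auto
  qed auto
  then show ?thesis using P1[of "Suc t"] P01[of t] by simp
qed

definition rho :: real where "rho = (2 * p - 1 + d) / p - ((1 - p) - d) / (1 - p)"

definition Aq :: "nat \<Rightarrow> nat \<Rightarrow> real" where
  "Aq s k = prob {\<omega> \<in> space M. X s \<omega> = 1 \<and> X (s + k) \<omega> = 1}"

lemma Aq_rec: "Aq s (Suc k) = (p - Aq s k) * ((1 - p) - d) / (1 - p) + Aq s k * (2 * p - 1 + d) / p"
proof -
  let ?t = "s + k"
  have split1: "prob {\<omega> \<in> space M. X s \<omega> = 1 \<and> X (Suc ?t) \<omega> = 1}
     = prob {\<omega> \<in> space M. X s \<omega> = 1 \<and> X ?t \<omega> = 0 \<and> X (Suc ?t) \<omega> = 1}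
     + prob {\<omega> \<in> space M. X s \<omega> = 1 \<and> X ?t \<omega> = 1 \<and> X (Suc ?t) \<omega> = 1}"
  proof (rule prob_split)
    show "AE \<omega> in M. (\<omega> \<in> {\<omega> \<in> space M. X s \<omega> = 1 \<and> X (Suc ?t) \<omega> = 1}) =
      (\<omega> \<in> {\<omega> \<in> space M. X s \<omega> = 1 \<and> X ?t \<omega> = 0 \<and> X (Suc ?t) \<omega> = 1}
     \<or> \<omega> \<in> {\<omega> \<in> space M. X s \<omega> = 1 \<and> X ?t \<omega> = 1 \<and> X (Suc ?t) \<omega> = 1})"
      using AE_01_t[of ?t] by eventually_elim auto
  qed auto
  have split2: "prob {\<omega> \<in> space M. X s \<omega> = 1}
     = prob {\<omega> \<in> space M. X s \<omega> = 1 \<and> X ?t \<omega> = 0}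
     + prob {\<omega> \<in> space M. X s \<omega> = 1 \<and> X ?t \<omega> = 1}"
  proof (rule prob_split)
    show "AE \<omega> in M. (\<omega> \<in> {\<omega> \<in> space M. X s \<omega> = 1}) =
      (\<omega> \<in> {\<omega> \<in> space M. X s \<omega> = 1 \<and> X ?t \<omega> = 0}
     \<or> \<omega> \<in> {\<omega> \<in> space M. X s \<omega> = 1 \<and> X ?t \<omega> = 1})"
      using AE_01_t[of ?t] by eventually_elim auto
  qed auto
  have t0: "prob {\<omega> \<in> space M. X s \<omega> = 1 \<and> X ?t \<omega> = 0 \<and> X (Suc ?t) \<omega> = 1} * (1 - p)
     = prob {\<omega> \<in> space M. X s \<omega> = 1 \<and> X ?t \<omega> = 0} * ((1 - p) - d)"
    using three[of s ?t 1 1 0] P0[of ?t] P01[of ?t] by simp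
  have t1: "prob {\<omega> \<in> space M. X s \<omega> = 1 \<and> X ?t \<omega> = 1 \<and> X (Suc ?t) \<omega> = 1} * p
     = prob {\<omega> \<in> space M. X s \<omega> = 1 \<and> X ?t \<omega> = 1} * (2 * p - 1 + d)"
    using three[of s ?t 1 1 1] P1[of ?t] P11[of ?t] by simp
  have q0: "1 - p \<noteq> 0" and pp: "p \<noteq> 0" using p0 p1 by auto
  have e1: "prob {\<omega> \<in> space M. X s \<omega> = 1 \<and> X ?t \<omega> = 0 \<and> X (Suc ?t) \<omega> = 1}
      = (p - Aq s k) * ((1 - p) - d) / (1 - p)"
    using t0 split2 P1[of s] q0 unfolding Aq_def by (simp add: field_simps)
  have e2: "prob {\<omega> \<in> space M. X s \<omega> = 1 \<and> X ?t \<omega> = 1 \<and> X (Suc ?t) \<omega> = 1}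
      = Aq s k * (2 * p - 1 + d) / p"
    using t1 pp unfolding Aq_def by (simp add: field_simps)
  show ?thesis using split1 e1 e2 unfolding Aq_def by simp
qed

lemma Aq_closed: "Aq s k = p^2 + p * (1 - p) * rho ^ k"
proof (induction k)
  case 0
  have "Aq s 0 = p" unfolding Aq_def using P1[of s] by simp
  then show ?case by (simp add: power2_eq_square algebra_simps)
next
  case (Suc k)
  have q0: "1 - p \<noteq> 0" and pp: "p \<noteq> 0" using p0 p1 by auto
  show ?case unfolding Aq_rec Suc rho_def using q0 pp
    by (simp add: field_simps power2_eq_square)
qed

end

context cmc begin

lemma X_ind: "AE \<omega> in M. X s \<omega> = indicator {\<omega> \<in> space M. X s \<omega> = 1} \<omega>"
  using AE_space AE_01_t[of s] by eventually_elim (auto simp: indicator_def)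

lemma XX_ind: "AE \<omega> in M. X s \<omega> * X t \<omega> = indicator {\<omega> \<in> space M. X s \<omega> = 1 \<and> X t \<omega> = 1} \<omega>"
  using AE_space AE_01_t[of s] AE_01_t[of t] by eventually_elim (auto simp: indicator_def)

lemma ind_meas1: "{\<omega> \<in> space M. X s \<omega> = 1} \<in> sets M" by measurable
lemma ind_meas2: "{\<omega> \<in> space M. X s \<omega> = 1 \<and> X t \<omega> = 1} \<in> sets M" by measurable

lemma ind_int1: "{\<omega> \<in> space M. X s \<omega> = 1} \<inter> space M = {\<omega> \<in> space M. X s \<omega> = 1}" by blast
lemma ind_int2: "{\<omega> \<in> space M. X s \<omega> = 1 \<and> X t \<omega> = 1} \<inter> space M = {\<omega> \<in> space M. X s \<omega> = 1 \<and> X t \<omega> = 1}" by blast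

lemma ind_bm1: "(indicator {\<omega> \<in> space M. X s \<omega> = 1} :: 'w \<Rightarrow> real) \<in> borel_measurable M"
  by (intro borel_measurable_indicator ind_meas1)
lemma ind_bm2: "(indicator {\<omega> \<in> space M. X s \<omega> = 1 \<and> X t \<omega> = 1} :: 'w \<Rightarrow> real) \<in> borel_measurable M"
  by (intro borel_measurable_indicator ind_meas2)
lemma XX_bm: "(\<lambda>\<omega>. X s \<omega> * X t \<omega>) \<in> borel_measurable M" by measurable

lemma X_int: "integrable M (X s)"
proof -
  have "integrable M (indicator {\<omega> \<in> space M. X s \<omega> = 1} :: 'w \<Rightarrow> real)"
    using ind_meas1 by (intro integrable_real_indicator) (simp_all add: emeasure_eq_measure)
  then show ?thesis
  proof (rule integrable_cong_AE_imp)
    show "AE x in M. indicator {\<omega> \<in> space M. X s \<omega> = 1} x = X s x"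
      using X_ind[of s] by eventually_elim (rule sym)
  qed (rule Xmeas)
qed

lemma X_exp: "expectation (X s) = p"
proof -
  have "expectation (X s) = expectation (indicator {\<omega> \<in> space M. X s \<omega> = 1})"
    by (rule integral_cong_AE[OF Xmeas ind_bm1 X_ind])
  also have "\<dots> = p" by (subst Bochner_Integration.integral_indicator) (simp only: ind_int1 P1)
  finally show ?thesis .
qed

lemma XX_int: "integrable M (\<lambda>\<omega>. X s \<omega> * X t \<omega>)"
proof -
  have "integrable M (indicator {\<omega> \<in> space M. X s \<omega> = 1 \<and> X t \<omega> = 1} :: 'w \<Rightarrow> real)"
    using ind_meas2 by (intro integrable_real_indicator) (simp_all add: emeasure_eq_measure)
  then show ?thesis
  proof (rule integrable_cong_AE_imp)
    show "AE x in M. indicator {\<omega> \<in> space M. X s \<omega> = 1 \<and> X t \<omega> = 1} x = X s x * X t x"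
      using XX_ind[of s t] by eventually_elim (rule sym)
  qed (rule XX_bm)
qed

lemma XX_exp: "expectation (\<lambda>\<omega>. X s \<omega> * X t \<omega>) = prob {\<omega> \<in> space M. X s \<omega> = 1 \<and> X t \<omega> = 1}"
proof -
  have "expectation (\<lambda>\<omega>. X s \<omega> * X t \<omega>) = expectation (indicator {\<omega> \<in> space M. X s \<omega> = 1 \<and> X t \<omega> = 1})"
    by (rule integral_cong_AE[OF XX_bm ind_bm2 XX_ind])
  also have "\<dots> = prob {\<omega> \<in> space M. X s \<omega> = 1 \<and> X t \<omega> = 1}" by (subst Bochner_Integration.integral_indicator) (simp only: ind_int2)
  finally show ?thesis .
qed

definition Dd :: "nat \<Rightarrow> nat \<Rightarrow> nat" where "Dd s t = (if s \<le> t then t - s else s - t)"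

lemma joint11: "prob {\<omega> \<in> space M. X s \<omega> = 1 \<and> X t \<omega> = 1} = p^2 + p * (1 - p) * rho ^ Dd s t"
proof (cases "s \<le> t")
  case True
  then have "prob {\<omega> \<in> space M. X s \<omega> = 1 \<and> X t \<omega> = 1} = Aq s (t - s)" unfolding Aq_def by simp
  then show ?thesis using True Aq_closed unfolding Dd_def by simp
next
  case False
  have "{\<omega> \<in> space M. X s \<omega> = 1 \<and> X t \<omega> = 1} = {\<omega> \<in> space M. X t \<omega> = 1 \<and> X (t + (s - t)) \<omega> = 1}"
    using False by auto
  then have "prob {\<omega> \<in> space M. X s \<omega> = 1 \<and> X t \<omega> = 1} = Aq t (s - t)" unfolding Aq_def by simp
  then show ?thesis using False Aq_closed unfolding Dd_def by simp
qed

lemma Y_eq: "(\<lambda>\<omega>. (X s \<omega> - p) * (X t \<omega> - p)) = (\<lambda>\<omega>. X s \<omega> * X t \<omega> - p * X t \<omega> - p * X s \<omega> + p^2)"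
  by (auto simp: fun_eq_iff algebra_simps power2_eq_square)

lemma Xt_mult_int: "integrable M (\<lambda>\<omega>. c * X t \<omega>)"
  by (rule integrable_mult_right) (rule X_int)

lemma Y_int: "integrable M (\<lambda>\<omega>. (X s \<omega> - p) * (X t \<omega> - p))"
  unfolding Y_eq
  by (intro Bochner_Integration.integrable_add Bochner_Integration.integrable_diff XX_int Xt_mult_int integrable_const)

lemma Y_exp: "expectation (\<lambda>\<omega>. (X s \<omega> - p) * (X t \<omega> - p)) = p * (1 - p) * rho ^ Dd s t"
proof -
  have i1: "integrable M (\<lambda>\<omega>. X s \<omega> * X t \<omega> - p * X t \<omega>)"
    by (intro Bochner_Integration.integrable_diff XX_int Xt_mult_int)
  have i2: "integrable M (\<lambda>\<omega>. X s \<omega> * X t \<omega> - p * X t \<omega> - p * X s \<omega>)"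
    by (intro Bochner_Integration.integrable_diff i1 Xt_mult_int)
  have e1: "expectation (\<lambda>\<omega>. X s \<omega> * X t \<omega> - p * X t \<omega> - p * X s \<omega> + p^2)
     = expectation (\<lambda>\<omega>. X s \<omega> * X t \<omega> - p * X t \<omega> - p * X s \<omega>) + expectation (\<lambda>\<omega>. p^2)"
    by (rule Bochner_Integration.integral_add[OF i2 integrable_const])
  have e2: "expectation (\<lambda>\<omega>. X s \<omega> * X t \<omega> - p * X t \<omega> - p * X s \<omega>)
     = expectation (\<lambda>\<omega>. X s \<omega> * X t \<omega> - p * X t \<omega>) - expectation (\<lambda>\<omega>. p * X s \<omega>)"
    by (rule Bochner_Integration.integral_diff[OF i1 Xt_mult_int])
  have e3: "expectation (\<lambda>\<omega>. X s \<omega> * X t \<omega> - p * X t \<omega>)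
     = expectation (\<lambda>\<omega>. X s \<omega> * X t \<omega>) - expectation (\<lambda>\<omega>. p * X t \<omega>)"
    by (rule Bochner_Integration.integral_diff[OF XX_int Xt_mult_int])
  have e4: "expectation (\<lambda>\<omega>. p * X t \<omega>) = p * p" for t
    using X_exp[of t] by (simp only: integral_mult_right_zero)
  have e5: "expectation (\<lambda>\<omega>. p^2) = p^2"
    by (simp add: prob_space)
  have e6: "expectation (\<lambda>\<omega>. X s \<omega> * X t \<omega>) = p^2 + p * (1 - p) * rho ^ Dd s t"
    using XX_exp[of s t] joint11[of s t] by (rule trans)
  have "expectation (\<lambda>\<omega>. (X s \<omega> - p) * (X t \<omega> - p))
     = (p^2 + p * (1 - p) * rho ^ Dd s t) - p * p - p * p + p^2"
    unfolding Y_eq e1 e2 e3 e4 e5 e6 ..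
  then show ?thesis by (simp add: power2_eq_square)
qed

lemma var_formula:
  fixes n :: nat
  defines "pb \<equiv> (\<lambda>\<omega>. (\<Sum>t\<le>n. X t \<omega>) / real (n + 1))"
  shows "real (n + 1) * variance pb = p * (1 - p) * (\<Sum>s\<le>n. \<Sum>t\<le>n. rho ^ Dd s t) / real (n + 1)"
proof -
  have n0: "real (n + 1) \<noteq> 0" by simp
  have "expectation pb = expectation (\<lambda>\<omega>. \<Sum>t\<le>n. X t \<omega>) / real (n + 1)"
    unfolding pb_def by (rule integral_divide_zero)
  also have "expectation (\<lambda>\<omega>. \<Sum>t\<le>n. X t \<omega>) = (\<Sum>t\<le>n. expectation (X t))"
    by (rule Bochner_Integration.integral_sum[OF X_int])
  also have "\<dots> = real (n + 1) * p" by (simp add: X_exp)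
  finally have Epb: "expectation pb = p" using n0 by simp
  have pt: "(pb \<omega> - p)^2 = (\<Sum>s\<le>n. \<Sum>t\<le>n. (X s \<omega> - p) * (X t \<omega> - p)) / (real (n + 1))^2" for \<omega>
  proof -
    have "pb \<omega> - p = (\<Sum>t\<le>n. (X t \<omega> - p)) / real (n + 1)"
      unfolding pb_def using n0 by (simp add: sum_subtractf field_simps)
    then show ?thesis
      by (simp add: power2_eq_square sum_product power_divide)
  qed
  have "variance pb = expectation (\<lambda>\<omega>. (\<Sum>s\<le>n. \<Sum>t\<le>n. (X s \<omega> - p) * (X t \<omega> - p)) / (real (n + 1))^2)"
    unfolding Epb pt ..
  also have "\<dots> = expectation (\<lambda>\<omega>. \<Sum>s\<le>n. \<Sum>t\<le>n. (X s \<omega> - p) * (X t \<omega> - p)) / (real (n + 1))^2"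
    by (rule integral_divide_zero)
  also have "expectation (\<lambda>\<omega>. \<Sum>s\<le>n. \<Sum>t\<le>n. (X s \<omega> - p) * (X t \<omega> - p))
      = (\<Sum>s\<le>n. expectation (\<lambda>\<omega>. \<Sum>t\<le>n. (X s \<omega> - p) * (X t \<omega> - p)))"
    by (rule Bochner_Integration.integral_sum) (intro Bochner_Integration.integrable_sum Y_int)
  also have "\<dots> = (\<Sum>s\<le>n. \<Sum>t\<le>n. expectation (\<lambda>\<omega>. (X s \<omega> - p) * (X t \<omega> - p)))"
    by (rule sum.cong[OF refl]) (rule Bochner_Integration.integral_sum, rule Y_int)
  also have "\<dots> = (\<Sum>s\<le>n. \<Sum>t\<le>n. p * (1 - p) * rho ^ Dd s t)"
    by (simp only: Y_exp)
  also have "\<dots> = p * (1 - p) * (\<Sum>s\<le>n. \<Sum>t\<le>n. rho ^ Dd s t)"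
    by (simp only: sum_distrib_left)
  finally have "variance pb = p * (1 - p) * (\<Sum>s\<le>n. \<Sum>t\<le>n. rho ^ Dd s t) / (real (n + 1))^2" .
  then show ?thesis using n0 by (simp add: power2_eq_square)
qed

end

lemma G_mul:
  fixes r :: real
  shows "(1 - r) * (\<Sum>s\<le>n. r ^ (Suc n - s)) = r * (1 - r ^ Suc n)"
proof (induction n)
  case 0
  then show ?case by (simp add: algebra_simps)
next
  case (Suc n)
  have "(\<Sum>s\<le>Suc n. r ^ (Suc (Suc n) - s)) = (\<Sum>s\<le>n. r ^ (Suc (Suc n) - s)) + r"
    by (simp add: sum.atMost_Suc)
  also have "(\<Sum>s\<le>n. r ^ (Suc (Suc n) - s)) = (\<Sum>s\<le>n. r * r ^ (Suc n - s))"
    by (rule sum.cong[OF refl]) (simp add: Suc_diff_le)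
  also have "\<dots> = r * (\<Sum>s\<le>n. r ^ (Suc n - s))" by (simp add: sum_distrib_left)
  finally have e: "(\<Sum>s\<le>Suc n. r ^ (Suc (Suc n) - s)) = r * (\<Sum>s\<le>n. r ^ (Suc n - s)) + r" .
  have "(1 - r) * (\<Sum>s\<le>Suc n. r ^ (Suc (Suc n) - s)) = r * ((1 - r) * (\<Sum>s\<le>n. r ^ (Suc n - s))) + r * (1 - r)"
    unfolding e by (simp add: algebra_simps)
  also have "\<dots> = r * (r * (1 - r ^ Suc n)) + r * (1 - r)" by (simp only: Suc.IH)
  finally show ?case by (simp add: algebra_simps)
qed

context cmc begin

lemma S_step:
  fixes r :: real
  shows "(\<Sum>s\<le>Suc n. \<Sum>t\<le>Suc n. r ^ Dd s t) = (\<Sum>s\<le>n. \<Sum>t\<le>n. r ^ Dd s t) + 2 * (\<Sum>s\<le>n. r ^ (Suc n - s)) + 1"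
proof -
  have a1: "(\<Sum>s\<le>n. r ^ Dd s (Suc n)) = (\<Sum>s\<le>n. r ^ (Suc n - s))"
    by (rule sum.cong[OF refl]) (simp add: Dd_def)
  have a2: "(\<Sum>t\<le>n. r ^ Dd (Suc n) t) = (\<Sum>s\<le>n. r ^ (Suc n - s))"
    by (rule sum.cong[OF refl]) (simp add: Dd_def)
  have a3: "r ^ Dd (Suc n) (Suc n) = 1" by (simp add: Dd_def)
  have "(\<Sum>s\<le>Suc n. \<Sum>t\<le>Suc n. r ^ Dd s t)
      = (\<Sum>s\<le>n. \<Sum>t\<le>Suc n. r ^ Dd s t) + (\<Sum>t\<le>Suc n. r ^ Dd (Suc n) t)"
    by (rule sum.atMost_Suc)
  also have "(\<Sum>s\<le>n. \<Sum>t\<le>Suc n. r ^ Dd s t) = (\<Sum>s\<le>n. (\<Sum>t\<le>n. r ^ Dd s t) + r ^ Dd s (Suc n))"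
    by (simp only: sum.atMost_Suc)
  also have "\<dots> = (\<Sum>s\<le>n. \<Sum>t\<le>n. r ^ Dd s t) + (\<Sum>s\<le>n. r ^ Dd s (Suc n))"
    by (rule sum.distrib)
  also have "(\<Sum>t\<le>Suc n. r ^ Dd (Suc n) t) = (\<Sum>t\<le>n. r ^ Dd (Suc n) t) + r ^ Dd (Suc n) (Suc n)"
    by (rule sum.atMost_Suc)
  finally show ?thesis unfolding a1 a2 a3 by simp
qed

lemma S_mul:
  fixes r :: real
  shows "(1 - r) * (1 - r) * (\<Sum>s\<le>n. \<Sum>t\<le>n. r ^ Dd s t) = real (n + 1) * (1 + r) * (1 - r) - 2 * r * (1 - r ^ Suc n)"
proof (induction n)
  case 0
  show ?case by (simp add: Dd_def algebra_simps)
next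
  case (Suc n)
  have "(1 - r) * (1 - r) * (\<Sum>s\<le>Suc n. \<Sum>t\<le>Suc n. r ^ Dd s t)
     = (1 - r) * (1 - r) * (\<Sum>s\<le>n. \<Sum>t\<le>n. r ^ Dd s t) + 2 * (1 - r) * ((1 - r) * (\<Sum>s\<le>n. r ^ (Suc n - s))) + (1 - r) * (1 - r)"
    unfolding S_step by (simp add: algebra_simps)
  also have "\<dots> = (real (n + 1) * (1 + r) * (1 - r) - 2 * r * (1 - r ^ Suc n)) + 2 * (1 - r) * (r * (1 - r ^ Suc n)) + (1 - r) * (1 - r)"
    by (simp only: Suc.IH G_mul)
  finally show ?case by (simp add: algebra_simps)
qed

lemma S_limit:
  fixes r c :: real assumes r: "\<bar>r\<bar> < 1"
  shows "(\<lambda>n. c * (\<Sum>s\<le>n. \<Sum>t\<le>n. r ^ Dd s t) / real (n + 1)) \<longlonglongrightarrow> c * (1 + r) / (1 - r)"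
proof -
  have r1': "1 - r \<noteq> 0" using r by auto
  define D where "D = (1 - r) * (1 - r)"
  have D0: "D \<noteq> 0" unfolding D_def using r1' by simp
  have eq: "c * (\<Sum>s\<le>n. \<Sum>t\<le>n. r ^ Dd s t) / real (n + 1)
     = c / D * ((1 + r) * (1 - r) - 2 * r * (1 - r ^ Suc n) * inverse (real (Suc n)))" for n
  proof -
    have n0: "real (n + 1) \<noteq> 0" by simp
    have Sx: "(\<Sum>s\<le>n. \<Sum>t\<le>n. r ^ Dd s t) = (real (n + 1) * (1 + r) * (1 - r) - 2 * r * (1 - r ^ Suc n)) / D"
      using S_mul[of r n] D0 unfolding D_def[symmetric] by (simp add: field_simps)
    have "(real (n + 1) * (1 + r) * (1 - r) - 2 * r * (1 - r ^ Suc n)) / real (n + 1)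
        = (1 + r) * (1 - r) - 2 * r * (1 - r ^ Suc n) * inverse (real (Suc n))"
      using n0 by (simp add: field_simps)
    then show ?thesis unfolding Sx by (simp add: field_simps)
  qed
  have pw: "(\<lambda>n. r ^ Suc n) \<longlonglongrightarrow> 0"
    by (rule LIMSEQ_Suc[OF LIMSEQ_power_zero]) (use r in simp)
  have "(\<lambda>n. c / D * ((1 + r) * (1 - r) - 2 * r * (1 - r ^ Suc n) * inverse (real (Suc n))))
     \<longlonglongrightarrow> c / D * ((1 + r) * (1 - r) - 2 * r * (1 - 0) * 0)"
    by (intro tendsto_intros pw LIMSEQ_inverse_real_of_nat)
  moreover have "c / D * ((1 + r) * (1 - r) - 2 * r * (1 - 0) * 0) = c * (1 + r) / (1 - r)"
  proof -
    have "c / D * ((1 + r) * (1 - r) - 2 * r * (1 - 0) * 0) = (c * (1 + r)) * (1 - r) / ((1 - r) * (1 - r))"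
      unfolding D_def by (simp add: mult.assoc)
    also have "\<dots> = c * (1 + r) / (1 - r)" by (rule nonzero_mult_divide_mult_cancel_right[OF r1'])
    finally show ?thesis .
  qed
  ultimately show ?thesis unfolding eq by simp
qed

lemma rho_lt: assumes "p < 1/2" shows "rho = (a - p) / (1 - p)"
proof -
  have "d = a * (1 - p) + (1 - a) * (1 - 2 * p)" unfolding d_def mix_copula_def using assms by simp
  then show ?thesis unfolding rho_def using p0 p1 by (simp add: field_simps)
qed

lemma rho_ge: assumes "p \<ge> 1/2" shows "rho = (p - 1 + a) / p"
proof -
  have hd: "d = a * (1 - p)" unfolding d_def mix_copula_def using assms by simp
  have q: "p \<noteq> 0" "1 - p \<noteq> 0" using p0 p1 by auto
  have "(2 * p - 1 + a * (1 - p)) / p - (1 - p - a * (1 - p)) / (1 - p) = (p - 1 + a) / p"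
    using q by (simp add: field_simps)
  then show ?thesis unfolding rho_def hd by simp
qed

lemma rho_abs: "\<bar>rho\<bar> < 1"
proof (cases "p < 1/2")
  case True
  have "(a - p) / (1 - p) < 1" "-1 < (a - p) / (1 - p)" using True a0 a1 p0 p1 by (simp_all add: field_simps)
  then show ?thesis unfolding abs_less_iff using rho_lt[OF True] by simp
next
  case False
  then have h: "p \<ge> 1/2" by simp
  have "(p - 1 + a) / p < 1" "-1 < (p - 1 + a) / p" using h a0 a1 p0 p1 by (simp_all add: field_simps)
  then show ?thesis unfolding abs_less_iff using rho_ge[OF h] by simp
qed

lemma final_limit:
  "(\<lambda>n. real (n + 1) * variance (\<lambda>\<omega>. (\<Sum>t\<le>n. X t \<omega>) / real (n + 1)))
     \<longlonglongrightarrow> p * (1 - p) * (1 + rho) / (1 - rho)"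
  unfolding var_formula by (rule S_limit[OF rho_abs])

lemma value_lt: assumes "p < 1/2"
  shows "p * (1 - p) * (1 + rho) / (1 - rho) = p * (1 - p) * (a + 1 - 2 * p) / (1 - a)"
proof -
  have q: "1 - p \<noteq> 0" "1 - a \<noteq> 0" using p1 a1 by auto
  have h1: "1 + rho = (a + 1 - 2 * p) / (1 - p)" unfolding rho_lt[OF assms] using q by (simp add: field_simps)
  have h2: "1 - rho = (1 - a) / (1 - p)" unfolding rho_lt[OF assms] using q by (simp add: field_simps)
  have h3: "p * (1 - p) * ((a + 1 - 2 * p) / (1 - p)) = p * (a + 1 - 2 * p)" using q by simp
  show ?thesis unfolding h1 h2 h3 divide_divide_eq_right by (simp add: algebra_simps)
qed

lemma value_ge: assumes "p \<ge> 1/2"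
  shows "p * (1 - p) * (1 + rho) / (1 - rho) = p * (1 - p) * (2 * p - 1 + a) / (1 - a)"
proof -
  have q: "p \<noteq> 0" "1 - a \<noteq> 0" using p0 a1 by auto
  have h1: "1 + rho = (2 * p - 1 + a) / p" unfolding rho_ge[OF assms] using q by (simp add: field_simps)
  have h2: "1 - rho = (1 - a) / p" unfolding rho_ge[OF assms] using q by (simp add: field_simps)
  show ?thesis unfolding h1 h2 using q by (simp add: field_simps)
qed

end

theorem proposition4:
  fixes M :: "'w measure" and X :: "nat \<Rightarrow> 'w \<Rightarrow> real" and a p :: real
  assumes "prob_space M"
    and "0 < a" "a < 1" "0 < p" "p < 1"
    and "copula_markov_chain M X (mix_copula a) (bernoulli_cdf p)"
  defines "pbar \<equiv> (\<lambda>n \<omega>. (\<Sum>t\<le>n. X t \<omega>) / real (n + 1))"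
  shows "(p < 1/2 \<longrightarrow>
           (\<lambda>n. real (n + 1) * prob_space.variance M (pbar n))
             \<longlonglongrightarrow> p * (1 - p) * (a + 1 - 2 * p) / (1 - a))
       \<and> (p \<ge> 1/2 \<longrightarrow>
           (\<lambda>n. real (n + 1) * prob_space.variance M (pbar n))
             \<longlonglongrightarrow> p * (1 - p) * (2 * p - 1 + a) / (1 - a))
       \<and> (p \<noteq> 1/2 \<longrightarrow>
           (\<lambda>n. real (n + 1) * prob_space.variance M (pbar n))
             \<longlonglongrightarrow> mle_asym_var_p a p)"
proof -
  interpret cmc M X a p
    by (intro cmc.intro cmc_axioms.intro) (use assms in auto)
  have L: "(\<lambda>n. real (n + 1) * variance (pbar n)) \<longlonglongrightarrow> p * (1 - p) * (1 + rho) / (1 - rho)"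
    unfolding pbar_def by (rule final_limit)
  have c1: "p < 1/2 \<longrightarrow> (\<lambda>n. real (n + 1) * variance (pbar n)) \<longlonglongrightarrow> p * (1 - p) * (a + 1 - 2 * p) / (1 - a)"
    using L value_lt by auto
  have c2: "p \<ge> 1/2 \<longrightarrow> (\<lambda>n. real (n + 1) * variance (pbar n)) \<longlonglongrightarrow> p * (1 - p) * (2 * p - 1 + a) / (1 - a)"
    using L value_ge by auto
  have c3: "p \<noteq> 1/2 \<longrightarrow> (\<lambda>n. real (n + 1) * variance (pbar n)) \<longlonglongrightarrow> mle_asym_var_p a p"
    using c1 c2 unfolding mle_asym_var_p_def by auto
  show ?thesis using c1 c2 c3 by blast
qed

end
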